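(* For every positive integer $n$ there exists an $n$-uniform hypergraph $G=(V,E)$ with $|V|=n^2$ vertices and $|E|=n^2$ edges with the following property: for every set $F\subseteq V$ with $|F|\le n^2/100$ there exists a set $H\subseteq V$ such that $|H|\le 100\,n\log n$, $H\cap F=\emptyset$, and $H$ intersects all but at most $n$ of the edges in $E$.
   Context: A hypergraph is $n$-uniform if every edge has exactly $n$ vertices. $\log$ denotes the natural logarithm. The stated property is called the "everywhere almost-hittable" (EAH) property. *)

theory Defs
  imports Complex_Main
begin

definition uniform_hypergraph :: "nat \<Rightarrow> 'a set \<Rightarrow> 'a set set \<Rightarrow> bool" where
  "uniform_hypergraph n V E \<longleftrightarrow> finite V \<and> (\<forall>e\<in>E. e \<subseteq> V \<and> card e = n)"

end

theory Submission
  imports Defs "HOL-Computational_Algebra.Primes" "HOL-Analysis.Analysis"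
begin

lemma prod_primes_dvd:
  fixes m :: nat
  assumes "finite P" "\<And>p. p \<in> P \<Longrightarrow> prime p \<and> p dvd m"
  shows "\<Prod>P dvd m"
  using assms
proof (induction P rule: finite_induct)
  case empty thus ?case by simp
next
  case (insert p P)
  have "coprime p (\<Prod>P)"
    using insert by (intro prod_coprime_right) (metis insert_iff primes_coprime)
  moreover have "p dvd m" "\<Prod>P dvd m" using insert by auto
  ultimately show ?case using insert by (simp add: divides_mult)
qed

lemma binom_odd_le: "(2*k+1) choose k \<le> (4::nat)^k"
proof -
  have "(2*k+1) choose k \<le> (\<Sum>j\<le>k. (2 * k + 1 choose j))"
    by (rule member_le_sum) auto
  also have "\<dots> = 2^(2*k)" by (rule binomial_r_part_sum)
  also have "\<dots> = 4^k" by (simp add: power_mult)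
  finally show ?thesis .
qed

lemma primorial_le: "\<Prod>{p::nat. prime p \<and> p \<le> N} \<le> 4 ^ N"
proof (induction N rule: less_induct)
  case (less N)
  consider "N \<le> 2" | "N > 2" "even N" | k where "N = 2*k+1" "k \<ge> 1"
  proof -
    assume a1: "N \<le> 2 \<Longrightarrow> thesis" and a2: "N > 2 \<Longrightarrow> even N \<Longrightarrow> thesis"
      and a3: "\<And>k. N = 2*k+1 \<Longrightarrow> k \<ge> 1 \<Longrightarrow> thesis"
    show thesis
    proof (cases "N \<le> 2")
      case True then show ?thesis by (rule a1)
    next
      case False
      show ?thesis
      proof (cases "even N")
        case True then show ?thesis using False a2 by simp
      next
        case F2: False
        then have "N = 2*((N-1) div 2)+1" by presburger
        moreover have "(N-1) div 2 \<ge> 1" using False by linarith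
        ultimately show ?thesis by (rule a3)
      qed
    qed
  qed
  then show ?case
  proof cases
    case 1
    then consider "N = 0" | "N = 1" | "N = 2" by linarith
    then show ?thesis
    proof cases
      case 1 then have "{p::nat. prime p \<and> p \<le> N} = {}" by (auto dest: prime_gt_1_nat)
      then show ?thesis by (simp only: prod.empty) simp
    next
      case 2 then have "{p::nat. prime p \<and> p \<le> N} = {}" by (auto dest: prime_gt_1_nat)
      then show ?thesis by (simp only: prod.empty) simp
    next
      case 3 then have "{p::nat. prime p \<and> p \<le> N} = {2}"
        by (auto intro!: antisym simp: prime_ge_2_nat)
      then show ?thesis using 3 by (simp only:) simp
    qed
  next
    case 2
    have "{p::nat. prime p \<and> p \<le> N} = {p::nat. prime p \<and> p \<le> N - 1}"
    proof (intro Collect_cong iffI conjI)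
      fix p assume "prime p \<and> p \<le> N"
      moreover have "p \<noteq> N" using 2 \<open>prime p \<and> p \<le> N\<close> prime_odd_nat by fastforce
      ultimately show "p \<le> N - 1" by linarith
    qed auto
    then have "\<Prod>{p::nat. prime p \<and> p \<le> N} \<le> 4^(N-1)" using less[of "N-1"] 2 by simp
    also have "\<dots> \<le> 4^N" by (intro power_increasing) auto
    finally show ?thesis .
  next
    case 3
    define A where "A = {p::nat. prime p \<and> p \<le> k+1}"
    define B where "B = {p::nat. prime p \<and> k+1 < p \<and> p \<le> 2*k+1}"
    have fA: "finite A" unfolding A_def by (rule finite_subset[of _ "{..k+1}"]) auto
    have fB: "finite B" unfolding B_def by (rule finite_subset[of _ "{..2*k+1}"]) auto
    have eq: "{p::nat. prime p \<and> p \<le> N} = A \<union> B" using 3 unfolding A_def B_def by auto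
    have disj: "A \<inter> B = {}" unfolding A_def B_def by auto
    have hA: "\<Prod>A \<le> 4^(k+1)" unfolding A_def using less[of "k+1"] 3 by simp
    have "\<Prod>B dvd ((2*k+1) choose k)"
    proof (rule prod_primes_dvd[OF fB])
      fix p assume p: "p \<in> B"
      then have pp: "prime p" and pk: "k+1 < p" "p \<le> 2*k+1" unfolding B_def by auto
      have f: "fact k * fact (2*k+1-k) * ((2*k+1) choose k) = (fact (2*k+1)::nat)"
        by (rule binomial_fact_lemma) simp
      have "p dvd fact (2*k+1)" using pp pk prime_dvd_fact_iff by blast
      moreover have "\<not> p dvd fact k * fact (2*k+1-k)"
      proof -
        have e: "2*k+1-k = k+1" by simp
        have "\<not> p dvd fact k" "\<not> p dvd fact (k+1)"
          using pk by (simp_all only: prime_dvd_fact_iff[OF pp])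
        then have "\<not> p dvd fact k" "\<not> p dvd fact (2*k+1-k)" by (simp_all add: e)
        then show ?thesis using pp prime_dvd_mult_iff by blast
      qed
      ultimately have "p dvd ((2*k+1) choose k)" using f pp
        by (metis prime_dvd_mult_iff)
      then show "prime p \<and> p dvd ((2*k+1) choose k)" using pp by simp
    qed
    moreover have "(2*k+1) choose k > 0" by simp
    ultimately have "\<Prod>B \<le> (2*k+1) choose k" by (rule dvd_imp_le)
    then have hB: "\<Prod>B \<le> 4^k"
      using binom_odd_le[of k] by linarith
    have "\<Prod>{p::nat. prime p \<and> p \<le> N} = \<Prod>A * \<Prod>B"
      using eq disj fA fB by (simp add: prod.union_disjoint)
    also have "\<dots> \<le> 4^(k+1) * 4^k" using hA hB by (rule mult_le_mono)
    also have "\<dots> = 4^N" using 3 by (simp add: power_add[symmetric])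
    finally show ?thesis .
  qed
qed


lemma sum_indicator_card: "finite A \<Longrightarrow> (\<Sum>i\<in>A. if P i then 1 else 0) = card {i\<in>A. P i}"
  by (simp add: sum.inter_filter[symmetric])

lemma mult_lt_pow: "prime (p::nat) \<Longrightarrow> k < p ^ k"
proof -
  assume "prime p"
  then have "2 \<le> p" by (rule prime_ge_2_nat)
  have "k < 2^k" by (rule less_exp)
  also have "(2::nat)^k \<le> p^k" using \<open>2 \<le> p\<close> by (rule power_mono) simp
  finally show ?thesis .
qed
lemma legendre:
  fixes p :: nat
  assumes pp: "prime p" and "n \<le> K"
  shows "multiplicity p (fact n) = (\<Sum>i\<in>{1..K}. n div p^i)"
  using assms(2)
proof (induction n)
  case 0
  then show ?case by simp
next
  case (Suc n)
  have p1: "p > 1" using prime_gt_1_nat pp by blast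
  have "multiplicity p (fact (Suc n) :: nat) = multiplicity p (Suc n * fact n)"
    by (simp add: fact_Suc del: of_nat_Suc)
  also have "\<dots> = multiplicity p (Suc n) + multiplicity p (fact n :: nat)"
    by (rule prime_elem_multiplicity_mult_distrib) (use pp in auto)
  also have "multiplicity p (fact n :: nat) = (\<Sum>i\<in>{1..K}. n div p^i)" using Suc by simp
  also have "multiplicity p (Suc n) = card {i\<in>{1..K}. p^i dvd Suc n}"
  proof -
    let ?m = "multiplicity p (Suc n)"
    have "p ^ ?m dvd Suc n" by (rule multiplicity_dvd)
    then have "p ^ ?m \<le> Suc n" by (rule dvd_imp_le) simp
    then have "?m \<le> K" using mult_lt_pow[OF pp, of ?m] Suc.prems by linarith
    have "{i\<in>{1..K}. p^i dvd Suc n} = {1..?m}"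
    proof -
      have "\<And>i. p^i dvd Suc n \<longleftrightarrow> i \<le> ?m"
        by (rule power_dvd_iff_le_multiplicity) (use p1 in auto)
      then have "{i\<in>{1..K}. p^i dvd Suc n} = {i\<in>{1..K}. i \<le> ?m}" by simp
      also have "\<dots> = {1..?m}" using \<open>?m \<le> K\<close> by auto
      finally show ?thesis .
    qed
    then show ?thesis by simp
  qed
  also have "card {i\<in>{1..K}. p^i dvd Suc n} = (\<Sum>i\<in>{1..K}. if p^i dvd Suc n then 1 else 0)"
    by (simp add: sum_indicator_card)
  also have "(\<Sum>i\<in>{1..K}. if p^i dvd Suc n then 1 else 0) + (\<Sum>i\<in>{1..K}. n div p^i)
      = (\<Sum>i\<in>{1..K}. Suc n div p^i)"
    by (subst sum.distrib[symmetric], rule sum.cong) (auto simp: div_Suc mod_eq_0_iff_dvd)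
  finally show ?case .
qed

lemma central_binom_prime_power:
  fixes p M :: nat
  assumes pp: "prime p" and M: "M \<ge> 1"
  shows "p ^ multiplicity p ((2*M) choose M) \<le> 2*M"
proof (rule ccontr)
  let ?C = "(2*M) choose M"
  let ?v = "multiplicity p ?C"
  assume "\<not> p ^ ?v \<le> 2*M"
  then have big: "p ^ ?v > 2*M" by simp
  have p1: "p > 1" using prime_gt_1_nat pp by blast
  have p0: "\<And>i. p^i > 0" using p1 by simp
  define T where "T i = 2*M div p^i - 2*(M div p^i)" for i
  have lo: "2*(M div p^i) \<le> 2*M div p^i" for i
  proof -
    have "(M div p^i) * p^i \<le> M" by (rule div_times_less_eq_dividend)
    then have "2*(M div p^i) * p^i \<le> 2*M" by simp
    then show ?thesis using p0[of i] by (simp add: less_eq_div_iff_mult_less_eq)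
  qed
  have hi: "T i \<le> 1" for i
  proof -
    have "2*M div p^i < 2*(M div p^i) + 2"
    proof -
      have e1: "M = (M div p^i) * p^i + M mod p^i" using div_mult_mod_eq[of M "p^i"] by simp
      have e2: "M mod p^i < p^i" using p0[of i] by simp
      have e3: "(2*(M div p^i) + 2) * p^i = 2*((M div p^i) * p^i) + 2*p^i" by (simp add: algebra_simps)
      have "2*M < (2*(M div p^i) + 2) * p^i" unfolding e3 using e1 e2 by linarith
      then show ?thesis using p0[of i] by (simp add: div_less_iff_less_mult)
    qed
    then show ?thesis unfolding T_def by linarith
  qed
  have zero: "T i = 0" if "i \<ge> ?v" for i
  proof -
    have "p^?v \<le> p^i" using that p1 by (simp add: power_increasing)
    then have "2*M < p^i" using big by linarith
    then have "2*M div p^i = 0" "M div p^i = 0" by simp_all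
    then show ?thesis unfolding T_def by simp
  qed
  have C0: "?C \<noteq> 0" by simp
  have f: "fact M * fact (2*M - M) * ?C = (fact (2*M) :: nat)"
    by (rule binomial_fact_lemma) simp
  have "multiplicity p (fact (2*M) :: nat) = multiplicity p (fact M :: nat) + multiplicity p (fact M :: nat) + ?v"
    using f[symmetric] pp by (simp add: prime_elem_multiplicity_mult_distrib)
  moreover have "multiplicity p (fact (2*M) :: nat) = (\<Sum>i\<in>{1..2*M}. 2*M div p^i)"
    by (rule legendre[OF pp]) simp
  moreover have "multiplicity p (fact M :: nat) = (\<Sum>i\<in>{1..2*M}. M div p^i)"
    by (rule legendre[OF pp]) simp
  moreover have "(\<Sum>i\<in>{1..2*M}. 2*M div p^i) = (\<Sum>i\<in>{1..2*M}. 2*(M div p^i)) + (\<Sum>i\<in>{1..2*M}. T i)"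
    by (subst sum.distrib[symmetric], rule sum.cong) (auto simp: T_def lo)
  ultimately have v: "?v = (\<Sum>i\<in>{1..2*M}. T i)" by (simp add: sum_distrib_left[symmetric])
  also have "\<dots> = (\<Sum>i\<in>{1..2*M}. if i < ?v then T i else 0)"
    using zero by (intro sum.cong) auto
  also have "\<dots> \<le> (\<Sum>i\<in>{1..2*M}. if i < ?v then 1 else 0)"
    using hi by (intro sum_mono) auto
  also have "\<dots> = card {i\<in>{1..2*M}. i < ?v}" by (simp add: sum_indicator_card)
  also have "\<dots> \<le> card {1..<?v}" by (intro card_mono) auto
  also have "\<dots> = ?v - 1" by simp
  finally have "?v \<le> ?v - 1" .
  moreover have "?v \<noteq> 0"
  proof
    assume "?v = 0" then have "p^?v = 1" by simp
    then show False using big M by linarith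
  qed
  ultimately show False by linarith
qed


lemma prod_mono2_nat:
  fixes f :: "'a \<Rightarrow> nat"
  assumes fin: "finite B" and sub: "A \<subseteq> B" and nn: "\<And>b. b \<in> B-A \<Longrightarrow> 1 \<le> f b"
  shows "prod f A \<le> prod f B"
proof -
  have "prod f B = prod f (B - A) * prod f A" by (rule prod.subset_diff[OF sub fin])
  moreover have "prod f (B - A) \<ge> 1" using nn by (intro prod_ge_1) auto
  ultimately show ?thesis by simp
qed

lemma analytic_bound:
  fixes x :: real
  assumes x: "x \<ge> 3200"
  shows "(sqrt x + 1) * ln x < (3/8) * x * ln 4"
proof -
  define y where "y = sqrt x"
  have y56: "y \<ge> 56" unfolding y_def by (rule real_le_rsqrt) (use x in simp)
  have xy: "x = y^2" unfolding y_def using x by simp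
  have lnx: "ln x = 2 * ln y" unfolding xy using y56 by (simp add: ln_realpow)
  have ln2: "ln (2::real) \<le> 1" using ln_le_minus_one[of 2] by simp
  have ln2': "ln (2::real) \<ge> 1/2"
  proof -
    have "ln (1/2::real) \<le> 1/2 - 1" by (rule ln_le_minus_one) simp
    then show ?thesis by (simp add: ln_div)
  qed
  have ln16: "ln (16::real) = 4 * ln 2"
    using ln_realpow[of 2 4] by simp
  have "ln (y/16) \<le> y/16 - 1" by (rule ln_le_minus_one) (use y56 in simp)
  then have lny: "ln y \<le> y/16 + 3" using y56 ln16 ln2 by (simp add: ln_div)
  have ln4: "ln (4::real) = 2 * ln 2" using ln_realpow[of 2 2] by simp
  have "(sqrt x + 1) * ln x = (y + 1) * (2 * ln y)" unfolding y_def lnx by simp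
  also have "\<dots> \<le> (y + 1) * (2 * (y/16 + 3))"
    using lny y56 by (intro mult_left_mono) auto
  also have "\<dots> < (3/8) * y^2"
  proof -
    have h1: "y*y \<ge> 56*y" using y56 by (intro mult_right_mono) auto
    have h2: "(y + 1) * (2 * (y/16 + 3)) = y*y/8 + 49/8*y + 6" by (simp add: field_simps)
    have h3: "(3/8) * y^2 = 3/8*(y*y)" by (simp add: power2_eq_square)
    show ?thesis unfolding h2 h3 using h1 y56 by linarith
  qed
  also have "\<dots> \<le> (3/8) * x * ln 4"
  proof -
    have "y*y*1 \<le> y*y*(2*ln 2)" using ln2' by (intro mult_left_mono) auto
    then show ?thesis unfolding xy ln4 by (simp add: power2_eq_square)
  qed
  finally show ?thesis .
qed

lemma prime_between:
  fixes N :: nat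
  assumes N: "N \<ge> 400"
  shows "\<exists>p. prime p \<and> N < p \<and> p \<le> 8*N"
proof (rule ccontr)
  assume no: "\<not> ?thesis"
  define M where "M = 4*N"
  define C where "C = (2*M) choose M"
  have C0: "C > 0" unfolding C_def by simp
  define P where "P = {p::nat. prime p \<and> p \<le> N}"
  have fP: "finite P" unfolding P_def by (rule finite_subset[of _ "{..N}"]) auto
  have PF: "prime_factors C \<subseteq> P"
  proof
    fix p assume p: "p \<in> prime_factors C"
    then have pp: "prime p" and pd: "p dvd C" using C0 by (auto simp: in_prime_factors_iff)
    have fe: "fact M * fact (2*M - M) * C = (fact (2*M) :: nat)"
      unfolding C_def by (rule binomial_fact_lemma) simp
    have "C dvd fact (2*M)"
      using dvd_triv_right[of C "fact M * fact (2*M - M)"] unfolding fe .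
    then have "p dvd fact (2*M)" using pd by (rule dvd_trans[rotated])
    then have "p \<le> 2*M" using prime_dvd_fact_iff[OF pp] by simp
    have "p \<le> N"
    proof (rule ccontr)
      assume "\<not> p \<le> N"
      then have "N < p \<and> p \<le> 8*N" using \<open>p \<le> 2*M\<close> unfolding M_def by simp
      with pp no show False by blast
    qed
    then show "p \<in> P" using pp unfolding P_def by simp
  qed
  define f where "f p = (if p*p \<le> 2*M then 2*M else p)" for p
  have "C = (\<Prod>p\<in>prime_factors C. p ^ multiplicity p C)"
    using prod_prime_factors[of C] C0 by simp
  also have "\<dots> \<le> (\<Prod>p\<in>prime_factors C. f p)"
  proof (rule prod_mono)
    fix p assume "p \<in> prime_factors C"
    then have pp: "prime p" using C0 by (auto simp: in_prime_factors_iff)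
    have M1: "M \<ge> 1" unfolding M_def using N by simp
    have bnd: "p ^ multiplicity p C \<le> 2*M" unfolding C_def by (rule central_binom_prime_power[OF pp M1])
    have "p ^ multiplicity p C \<le> f p"
    proof (cases "p*p \<le> 2*M")
      case True then show ?thesis using bnd unfolding f_def by simp
    next
      case False
      then have "p ^ multiplicity p C < p^2" using bnd by (simp add: power2_eq_square)
      then have "multiplicity p C < 2" using prime_gt_1_nat[OF pp] by (simp add: power_strict_increasing_iff)
      then have "p ^ multiplicity p C \<le> p ^ 1" using prime_gt_1_nat[OF pp]
        by (intro power_increasing) auto
      then show ?thesis using False unfolding f_def by simp
    qed
    then show "0 \<le> p ^ multiplicity p C \<and> p ^ multiplicity p C \<le> f p" by simp
  qed
  also have "\<dots> \<le> (\<Prod>p\<in>P. f p)"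
    by (intro prod_mono2_nat fP PF) (use N in \<open>auto simp: f_def P_def M_def dest: prime_gt_1_nat\<close>)
  also have "(\<Prod>p\<in>P. f p) = (\<Prod>p\<in>{p\<in>P. p*p \<le> 2*M}. f p) * (\<Prod>p\<in>{p\<in>P. \<not> p*p \<le> 2*M}. f p)"
  proof -
    have "P = {p\<in>P. p*p \<le> 2*M} \<union> {p\<in>P. \<not> p*p \<le> 2*M}" by auto
    then show ?thesis using fP by (metis (no_types, lifting) prod.union_disjoint finite_Un disjoint_iff mem_Collect_eq)
  qed
  also have "(\<Prod>p\<in>{p\<in>P. p*p \<le> 2*M}. f p) = (2*M) ^ card {p\<in>P. p*p \<le> 2*M}"
    by (simp add: f_def)
  also have "(\<Prod>p\<in>{p\<in>P. \<not> p*p \<le> 2*M}. f p) = (\<Prod>p\<in>{p\<in>P. \<not> p*p \<le> 2*M}. p)"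
    by (rule prod.cong) (auto simp: f_def)
  also have "\<dots> \<le> \<Prod>P"
    by (intro prod_mono2_nat fP) (auto simp: P_def dest: prime_gt_1_nat)
  also have "\<Prod>P \<le> 4^N" unfolding P_def by (rule primorial_le)
  finally have Cup: "C \<le> (2*M) ^ card {p\<in>P. p*p \<le> 2*M} * 4^N" by simp
  define r where "r = nat \<lfloor>sqrt (real (2*M))\<rfloor>"
  have rs: "real r \<le> sqrt (real (2*M))" unfolding r_def by simp
  have "card {p\<in>P. p*p \<le> 2*M} \<le> card {1..r}"
  proof (rule card_mono)
    show "{p\<in>P. p*p \<le> 2*M} \<subseteq> {1..r}"
    proof
      fix p assume p: "p \<in> {p\<in>P. p*p \<le> 2*M}"
      then have "real p ^ 2 \<le> real (2*M)" by (simp add: power2_eq_square flip: of_nat_mult)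
      then have "real p \<le> sqrt (real (2*M))" by (rule real_le_rsqrt)
      then have "p \<le> r" unfolding r_def by (simp add: le_nat_floor)
      moreover have "p \<ge> 1" using p unfolding P_def by (auto dest: prime_gt_1_nat)
      ultimately show "p \<in> {1..r}" by simp
    qed
  qed simp
  then have cardS: "card {p\<in>P. p*p \<le> 2*M} \<le> r" by simp
  have "(2*M) ^ card {p\<in>P. p*p \<le> 2*M} \<le> (2*M)^r"
    by (rule power_increasing[OF cardS]) (use N in \<open>simp add: M_def\<close>)
  then have "C \<le> (2*M) ^ r * 4^N" using Cup by (meson le_trans mult_le_mono1)
  then have "real C \<le> real ((2*M) ^ r * 4^N)" by (simp only: of_nat_le_iff)
  then have Cr: "real C \<le> real (2*M) ^ r * 4^N" by simp
  have M0: "M > 0" unfolding M_def using N by simp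
  have "4^M / (2 * real M) \<le> real C" unfolding C_def by (rule central_binomial_lower_bound[OF M0])
  then have "(4::real)^M \<le> real (2*M) * real C" using M0 by (simp add: field_simps)
  also have "\<dots> \<le> real (2*M) * (real (2*M) ^ r * 4^N)" using Cr by (intro mult_left_mono) auto
  also have "\<dots> = real (2*M) ^ (r+1) * 4^N" by simp
  finally have "(4::real)^(3*N) * 4^N \<le> real (2*M) ^ (r+1) * 4^N"
    unfolding M_def by (simp add: power_add[symmetric])
  then have ineq: "(4::real)^(3*N) \<le> real (2*M) ^ (r+1)" by simp
  have "ln ((4::real)^(3*N)) \<le> ln (real (2*M) ^ (r+1))"
    using ineq M0 by (subst ln_le_cancel_iff) auto
  then have "real (3*N) * ln 4 \<le> real (r+1) * ln (real (2*M))" by (simp only: ln_realpow)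
  also have "\<dots> \<le> (sqrt (real (2*M)) + 1) * ln (real (2*M))"
    using rs M0 by (intro mult_right_mono) auto
  also have "\<dots> < (3/8) * real (2*M) * ln 4"
    by (rule analytic_bound) (use N in \<open>simp add: M_def\<close>)
  finally show False unfolding M_def by simp
qed


definition gf :: "nat \<Rightarrow> nat \<Rightarrow> nat \<times> nat \<Rightarrow> nat \<Rightarrow> nat" where
  "gf p s bc x = ((snd bc * s + fst bc * x) mod p) div s"

lemma div_eq_close:
  fixes a b s :: nat
  assumes "a div s = b div s" "s > 0"
  shows "\<bar>int a - int b\<bar> < int s"
proof -
  have e1: "int a = int (a div s * s) + int (a mod s)" by (simp only: of_nat_add[symmetric] div_mult_mod_eq)
  have e2: "int b = int (a div s * s) + int (b mod s)" unfolding assms(1) by (simp only: of_nat_add[symmetric] div_mult_mod_eq)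
  have "a mod s < s" "b mod s < s" using assms by simp_all
  then have "int (a mod s) < int s" "int (b mod s) < int s" by simp_all
  then show ?thesis using e1 e2 by linarith
qed

lemma cong_u:
  fixes p c s b x :: nat
  shows "int p dvd (int ((c* s + b*x) mod p) - (int c * int s + int b * int x))"
proof -
  have "int ((c* s + b*x) mod p) = (int c * int s + int b * int x) mod int p"
    by (simp add: zmod_int)
  then have "int ((c* s + b*x) mod p) mod int p = (int c * int s + int b * int x) mod int p" by simp
  then show ?thesis by (simp add: mod_eq_dvd_iff)
qed

lemma agreement:
  fixes p s q n :: nat
  assumes pp: "prime p" and s0: "s > 0" and qs: "q * s \<le> p" and np: "n \<le> p"
    and i: "fst i < p" "snd i < q" and j: "fst j < p" "snd j < q" and ij: "i \<noteq> j"
  shows "card {x\<in>{..<n}. gf p s i x = gf p s j x} \<le> 2* s - 1"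
proof -
  obtain b c where bc: "i = (b, c)" by (cases i)
  obtain b' c' where bc': "j = (b', c')" by (cases j)
  define A where "A = {x\<in>{..<n}. gf p s i x = gf p s j x}"
  define D where "D x = int ((c* s + b*x) mod p) - int ((c'* s + b'*x) mod p)" for x
  have close: "\<bar>D x\<bar> < int s" if "x \<in> A" for x
    using that div_eq_close[OF _ s0] unfolding A_def D_def gf_def bc bc' by auto
  have dv: "int p dvd (D x - ((int c - int c') * int s + (int b - int b') * int x))" for x
  proof -
    have "int p dvd (int ((c* s + b*x) mod p) - (int c * int s + int b * int x)) - 
                     (int ((c'* s + b'*x) mod p) - (int c' * int s + int b' * int x))"
      using cong_u[of p c s b x] cong_u[of p c' s b' x] by (rule dvd_diff)
    then show ?thesis unfolding D_def by (simp add: algebra_simps)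
  qed
  have pint: "prime (int p)" using pp by (simp add: prime_nat_int_transfer)
  show ?thesis
  proof (cases "b = b'")
    case True
    then have cc: "c \<noteq> c'" using ij bc bc' by simp
    have "A = {}"
    proof (rule ccontr)
      assume "A \<noteq> {}"
      then obtain x where x: "x \<in> A" by blast
      define d where "d = (int c - int c') * int s"
      have "int p dvd (D x - d)" using dv[of x] True unfolding d_def by simp
      have dge: "\<bar>d\<bar> \<ge> int s"
      proof -
        have "\<bar>int c - int c'\<bar> \<ge> 1" using cc by linarith
        then have "\<bar>int c - int c'\<bar> * int s \<ge> 1 * int s" by (intro mult_right_mono) auto
        then show ?thesis unfolding d_def by (simp add: abs_mult)
      qed
      have dle: "\<bar>d\<bar> \<le> int p - int s"
      proof -
        have "\<bar>int c - int c'\<bar> \<le> int q - 1" using i j bc bc' by auto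
        then have "\<bar>int c - int c'\<bar> * int s \<le> (int q - 1) * int s" by (intro mult_right_mono) auto
        moreover have "int q * int s \<le> int p" using qs by (metis of_nat_le_iff of_nat_mult)
        moreover have "\<bar>d\<bar> = \<bar>int c - int c'\<bar> * int s" by (simp add: d_def abs_mult)
        moreover have "(int q - 1) * int s = int q * int s - int s" by (simp add: algebra_simps)
        ultimately show ?thesis by linarith
      qed
      have Dx: "\<bar>D x\<bar> < int s" using close x .
      show False
      proof (cases "D x - d = 0")
        case True then show False using Dx dge by simp
      next
        case False
        then have "\<bar>int p\<bar> \<le> \<bar>D x - d\<bar>" using \<open>int p dvd (D x - d)\<close> by (rule dvd_imp_le_int)
        then show False using Dx dle by linarith
      qed
    qed
    then have "card A = 0" by simp
    then show ?thesis unfolding A_def by linarith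
  next
    case False
    have inj: "inj_on D A"
    proof (rule inj_onI)
      fix x1 x2 assume x1: "x1 \<in> A" and x2: "x2 \<in> A" and eq: "D x1 = D x2"
      have "int p dvd ((D x1 - ((int c - int c') * int s + (int b - int b') * int x1))
                     - (D x2 - ((int c - int c') * int s + (int b - int b') * int x2)))"
        using dv[of x1] dv[of x2] by (rule dvd_diff)
      then have "int p dvd ((int b - int b') * (int x2 - int x1))" using eq by (simp add: algebra_simps)
      then have "int p dvd (int b - int b') \<or> int p dvd (int x2 - int x1)"
        using pint by (simp add: prime_dvd_mult_iff)
      moreover have "\<not> int p dvd (int b - int b')"
      proof
        assume "int p dvd (int b - int b')"
        moreover have "int b - int b' \<noteq> 0" using False by simp
        ultimately have "\<bar>int p\<bar> \<le> \<bar>int b - int b'\<bar>" by (intro dvd_imp_le_int)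
        then show False using i j bc bc' by auto
      qed
      moreover have "int x2 - int x1 \<noteq> 0 \<Longrightarrow> \<not> int p dvd (int x2 - int x1)"
      proof
        assume "int x2 - int x1 \<noteq> 0" "int p dvd (int x2 - int x1)"
        then have "\<bar>int p\<bar> \<le> \<bar>int x2 - int x1\<bar>" by (intro dvd_imp_le_int)
        then show False using x1 x2 np unfolding A_def by auto
      qed
      ultimately show "x1 = x2" by auto
    qed
    have "D ` A \<subseteq> {-(int s - 1)..int s - 1}" using close by fastforce
    then have "card A \<le> card {-(int s - 1)..int s - 1}"
      using inj by (intro card_inj_on_le) auto
    also have "\<dots> = 2* s - 1" using s0 by simp
    finally show ?thesis unfolding A_def .
  qed
qed


lemma construction:
  fixes n :: nat
  assumes n100: "n \<ge> 100"
  shows "\<exists>(I :: (nat \<times> nat) set) g. finite I \<and> card I = n^2 \<and>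
           (\<forall>i x. i \<in> I \<longrightarrow> x < n \<longrightarrow> g i x < n) \<and>
           (\<forall>i j. i \<in> I \<longrightarrow> j \<in> I \<longrightarrow> i \<noteq> j \<longrightarrow> card {x\<in>{..<n}. g i x = g j x} \<le> 63)"
proof -
  obtain p where pp: "prime p" and p1: "4*n < p" and p2: "p \<le> 8*(4*n)"
    using prime_between[of "4*n"] n100 by auto
  define s where "s = (p + n - 1) div n"
  define q where "q = p div s"
  have n0: "n > 0" using n100 by simp
  have sn1: "s * n \<le> p + n - 1" unfolding s_def by (rule div_times_less_eq_dividend)
  have sn2: "p \<le> s * n"
  proof -
    have "(p+n-1) div n < s + 1" unfolding s_def by simp
    then have "p + n - 1 < (s + 1) * n" using div_less_iff_less_mult[OF n0] by blast
    then show ?thesis by (simp add: algebra_simps)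
  qed
  have s0: "s > 0" using sn2 p1 by (cases "s = 0") auto
  have s32: "s \<le> 32"
  proof -
    have "p + n - 1 < 33 * n" using p2 n0 by linarith
    then have "s < 33" unfolding s_def using n0 by (simp add: div_less_iff_less_mult)
    then show ?thesis by simp
  qed
  have qs: "q * s \<le> p" unfolding q_def by (rule div_times_less_eq_dividend)
  have pq: "p < (q + 1) * s"
  proof -
    have "p div s < q + 1" unfolding q_def by simp
    then show ?thesis using div_less_iff_less_mult[OF s0] by blast
  qed
  have np: "n \<le> p" using p1 by simp
  define Idx where "Idx = {..<p} \<times> {..<q}"
  have cIdx: "card Idx = p * q" unfolding Idx_def by (simp add: card_cartesian_product)
  have count: "n^2 \<le> p * q"
  proof -
    have "p * n < (q+1) * s * n" using pq n0 by simp
    also have "\<dots> = (q+1) * (s*n)" by (simp add: algebra_simps)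
    also have "\<dots> \<le> (q+1) * (p + n)" using sn1 by (intro mult_left_mono) auto
    finally have h: "p * n < (q+1) * (p + n)" .
    have "4 * (p*n) < 4 * ((q+1) * (p + n))" using h by simp
    also have "\<dots> = (q+1) * (4*(p+n))" by simp
    also have "\<dots> \<le> (q+1) * (5*p)" using p1 by (intro mult_left_mono) auto
    finally have "p * (4*n) < p * (5*(q+1))" by (simp add: algebra_simps)
    then have h2: "4*n < 5*(q+1)" by simp
    have r1: "real p \<ge> 4 * real n" using p1 by simp
    have "4*n \<le> 5*q + 4" using h2 by simp
    then have "real (4*n) \<le> real (5*q+4)" by (simp only: of_nat_le_iff)
    then have r2: "5 * real q \<ge> 4 * real n - 4" by simp
    have r3: "real p * (5 * real q) \<ge> (4 * real n) * (4 * real n - 4)"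
      using r1 r2 n100 by (intro mult_mono) auto
    have r4: "real n * real n \<ge> 100 * real n" using n100 by (intro mult_right_mono) auto
    have "real (n^2) \<le> real (p * q)" using r3 r4 by (simp add: algebra_simps power2_eq_square)
    then show ?thesis by (simp only: of_nat_le_iff)
  qed
  obtain I where I: "I \<subseteq> Idx" "card I = n^2" "finite I"
    using obtain_subset_with_card_n[of "n^2" Idx] count cIdx by auto
  have gl: "gf p s i x < n" for i x
  proof -
    have "(snd i * s + fst i * x) mod p < p" using p1 by simp
    then have "(snd i * s + fst i * x) mod p < n * s" using sn2 by (simp add: mult.commute)
    then show ?thesis unfolding gf_def using s0 by (simp add: div_less_iff_less_mult)
  qed
  have agr: "card {x\<in>{..<n}. gf p s i x = gf p s j x} \<le> 63" if "i \<in> I" "j \<in> I" "i \<noteq> j" for i j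
  proof -
    have "i \<in> Idx" "j \<in> Idx" using that I by auto
    then have "fst i < p" "snd i < q" "fst j < p" "snd j < q" unfolding Idx_def by (auto simp: mem_Times_iff)
    then have "card {x\<in>{..<n}. gf p s i x = gf p s j x} \<le> 2* s - 1"
      using agreement[OF pp s0 qs np] that(3) by blast
    then show ?thesis using s32 by linarith
  qed
  show ?thesis using I gl agr by (intro exI[of _ I] exI[of _ "gf p s"]) auto
qed


lemma sum_ind_card: "finite A \<Longrightarrow> (\<Sum>i\<in>A. if P i then 1 else 0::nat) = card {i\<in>A. P i}"
  by (simp add: sum.inter_filter[symmetric])

lemma cs_bad:
  fixes e :: "'i \<Rightarrow> 'a set" and B :: "'i set" and F :: "'a set" and n lam :: nat
  assumes fB: "finite B" and fF: "finite F" and n0: "n > 0"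
    and sz: "\<And>i. i \<in> B \<Longrightarrow> card (e i \<inter> F) \<le> n"
    and inter: "\<And>i j. i \<in> B \<Longrightarrow> j \<in> B \<Longrightarrow> i \<noteq> j \<Longrightarrow> card (e i \<inter> e j \<inter> F) \<le> lam"
    and bad: "\<And>i. i \<in> B \<Longrightarrow> 10 * card (e i \<inter> F) \<ge> 9 * n"
    and Fsz: "100 * card F \<le> n^2"
  shows "(81 - real lam) * card B \<le> n"
proof -
  define d where "d v = card {i\<in>B. v \<in> e i}" for v
  have d_sum: "d v = (\<Sum>i\<in>B. if v \<in> e i then 1 else 0)" for v
    unfolding d_def by (simp add: sum_ind_card fB)
  have S1: "(\<Sum>v\<in>F. d v) = (\<Sum>i\<in>B. card (e i \<inter> F))"
  proof -
    have "(\<Sum>v\<in>F. d v) = (\<Sum>i\<in>B. \<Sum>v\<in>F. if v \<in> e i then 1 else 0)"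
      unfolding d_sum by (rule sum.swap)
    also have "\<dots> = (\<Sum>i\<in>B. card (e i \<inter> F))"
    proof (rule sum.cong)
      fix i assume "i \<in> B"
      have "(\<Sum>v\<in>F. if v \<in> e i then 1 else 0) = card {v\<in>F. v \<in> e i}" by (simp add: sum_ind_card fF)
      also have "{v\<in>F. v \<in> e i} = e i \<inter> F" by auto
      finally show "(\<Sum>v\<in>F. if v \<in> e i then 1 else 0) = card (e i \<inter> F)" .
    qed simp
    finally show ?thesis .
  qed
  have S2: "(\<Sum>v\<in>F. (d v)^2) = (\<Sum>i\<in>B. \<Sum>j\<in>B. card (e i \<inter> e j \<inter> F))"
  proof -
    have "(d v)^2 = (\<Sum>i\<in>B. \<Sum>j\<in>B. if v \<in> e i \<inter> e j then 1 else 0)" for v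
      unfolding power2_eq_square d_sum sum_product by (intro sum.cong) auto
    then have "(\<Sum>v\<in>F. (d v)^2) = (\<Sum>v\<in>F. \<Sum>i\<in>B. \<Sum>j\<in>B. if v \<in> e i \<inter> e j then 1 else 0)" by simp
    also have "\<dots> = (\<Sum>i\<in>B. \<Sum>v\<in>F. \<Sum>j\<in>B. if v \<in> e i \<inter> e j then 1 else 0)" by (rule sum.swap)
    also have "\<dots> = (\<Sum>i\<in>B. \<Sum>j\<in>B. \<Sum>v\<in>F. if v \<in> e i \<inter> e j then 1 else 0)"
      by (intro sum.cong refl sum.swap)
    also have "\<dots> = (\<Sum>i\<in>B. \<Sum>j\<in>B. card (e i \<inter> e j \<inter> F))"
    proof (intro sum.cong refl)
      fix i j
      have "(\<Sum>v\<in>F. if v \<in> e i \<inter> e j then 1 else 0) = card {v\<in>F. v \<in> e i \<inter> e j}" by (simp add: sum_ind_card fF)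
      also have "{v\<in>F. v \<in> e i \<inter> e j} = e i \<inter> e j \<inter> F" by auto
      finally show "(\<Sum>v\<in>F. if v \<in> e i \<inter> e j then 1 else 0) = card (e i \<inter> e j \<inter> F)" .
    qed
    finally show ?thesis .
  qed
  define L where "L = card B"
  have S2le: "(\<Sum>i\<in>B. \<Sum>j\<in>B. card (e i \<inter> e j \<inter> F)) \<le> L * (n + L * lam)"
  proof -
    have "(\<Sum>j\<in>B. card (e i \<inter> e j \<inter> F)) \<le> n + L * lam" if i: "i \<in> B" for i
    proof -
      have "(\<Sum>j\<in>B. card (e i \<inter> e j \<inter> F)) = card (e i \<inter> e i \<inter> F) + (\<Sum>j\<in>B-{i}. card (e i \<inter> e j \<inter> F))"
        by (rule sum.remove[OF fB i])
      also have "card (e i \<inter> e i \<inter> F) \<le> n" using sz[OF i] by simp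
      also have "(\<Sum>j\<in>B-{i}. card (e i \<inter> e j \<inter> F)) \<le> (\<Sum>j\<in>B-{i}. lam)"
        using inter i by (intro sum_mono) auto
      also have "\<dots> \<le> L * lam" unfolding L_def by (simp add: card_Diff_subset_Int fB)
      finally show ?thesis by simp
    qed
    then have "(\<Sum>i\<in>B. \<Sum>j\<in>B. card (e i \<inter> e j \<inter> F)) \<le> (\<Sum>i\<in>B. n + L * lam)" by (intro sum_mono) auto
    also have "\<dots> = L * (n + L * lam)" unfolding L_def by simp
    finally show ?thesis .
  qed
  have S1ge: "9 * n * L \<le> 10 * (\<Sum>v\<in>F. d v)"
  proof -
    have "9 * n * L = (\<Sum>i\<in>B. 9 * n)" unfolding L_def by simp
    also have "\<dots> \<le> (\<Sum>i\<in>B. 10 * card (e i \<inter> F))" using bad by (intro sum_mono) auto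
    also have "\<dots> = 10 * (\<Sum>v\<in>F. d v)" unfolding S1 by (simp add: sum_distrib_left)
    finally show ?thesis .
  qed
  have CS: "(\<Sum>v\<in>F. real (d v))^2 \<le> (\<Sum>v\<in>F. (real (d v))^2) * card F"
    by (rule sum_squared_le_sum_of_squares)
  define s1 where "s1 = real (\<Sum>v\<in>F. d v)"
  define s2 where "s2 = real (\<Sum>v\<in>F. (d v)^2)"
  have CS': "s1^2 \<le> s2 * card F" using CS unfolding s1_def s2_def by simp
  have s2le: "s2 \<le> real L * (real n + real L * real lam)"
  proof -
    have "real (\<Sum>i\<in>B. \<Sum>j\<in>B. card (e i \<inter> e j \<inter> F)) \<le> real (L * (n + L * lam))"
      using S2le by (simp only: of_nat_le_iff)
    then show ?thesis unfolding s2_def S2 by simp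
  qed
  have s1ge: "9 * real n * real L \<le> 10 * s1"
  proof -
    have "real (9 * n * L) \<le> real (10 * (\<Sum>v\<in>F. d v))" using S1ge by (simp only: of_nat_le_iff)
    then show ?thesis unfolding s1_def by simp
  qed
  have Fr: "100 * real (card F) \<le> real n ^ 2"
  proof -
    have "real (100 * card F) \<le> real (n^2)" using Fsz by (simp only: of_nat_le_iff)
    then show ?thesis by simp
  qed
  show ?thesis
  proof (cases "L = 0")
    case True then show ?thesis unfolding L_def by simp
  next
    case False
    then have L0: "real L > 0" by simp
    have s10: "s1 \<ge> 0" unfolding s1_def by (simp add: sum_nonneg)
    have s20: "s2 \<ge> 0" unfolding s2_def by (simp add: sum_nonneg)
    have "(9 * real n * real L)^2 \<le> (10 * s1)^2"
      using s1ge by (intro power_mono) auto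
    also have "\<dots> = 100 * s1^2" by (simp add: power2_eq_square)
    also have "\<dots> \<le> 100 * (s2 * card F)" using CS' by simp
    also have "\<dots> = s2 * (100 * card F)" by simp
    also have "\<dots> \<le> s2 * real n ^ 2" using Fr s20 by (intro mult_left_mono) auto
    also have "\<dots> \<le> (real L * (real n + real L * real lam)) * real n ^ 2"
      using s2le by (intro mult_right_mono) auto
    finally have "81 * real L * real L * real n^2 \<le> (real n + real L * real lam) * real L * real n ^ 2"
      by (simp add: power2_eq_square algebra_simps)
    then have "81 * real L * real L \<le> (real n + real L * real lam) * real L"
      using n0 by (simp add: mult_le_cancel_right)
    then have "81 * real L \<le> real n + real L * real lam"
      using L0 by (simp add: mult_le_cancel_right)
    then show ?thesis unfolding L_def by (simp add: algebra_simps)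
  qed
qed


lemma greedy_step:
  fixes P :: "'i \<Rightarrow> nat \<Rightarrow> 'a" and R :: "'i set" and F :: "'a set"
  assumes fR: "finite R" and n0: "n > 0"
    and good: "\<And>i. i \<in> R \<Longrightarrow> 10 * card {x\<in>{..<n}. P i x \<notin> F} \<ge> n"
  shows "\<exists>x<n. 10 * card {i\<in>R. P i x \<notin> F} \<ge> card R"
proof (rule ccontr)
  assume "\<not> ?thesis"
  then have lt: "\<And>x. x < n \<Longrightarrow> 10 * card {i\<in>R. P i x \<notin> F} < card R" by auto
  have "(\<Sum>x\<in>{..<n}. card {i\<in>R. P i x \<notin> F}) = (\<Sum>x\<in>{..<n}. \<Sum>i\<in>R. if P i x \<notin> F then 1 else 0)"
    by (simp add: sum_ind_card fR)
  also have "\<dots> = (\<Sum>i\<in>R. \<Sum>x\<in>{..<n}. if P i x \<notin> F then 1 else 0)" by (rule sum.swap)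
  also have "\<dots> = (\<Sum>i\<in>R. card {x\<in>{..<n}. P i x \<notin> F})" by (simp add: sum_ind_card)
  finally have eq: "(\<Sum>x\<in>{..<n}. card {i\<in>R. P i x \<notin> F}) = (\<Sum>i\<in>R. card {x\<in>{..<n}. P i x \<notin> F})" .
  have "n * card R = (\<Sum>i\<in>R. n)" by simp
  also have "\<dots> \<le> (\<Sum>i\<in>R. 10 * card {x\<in>{..<n}. P i x \<notin> F})" using good by (intro sum_mono) auto
  also have "\<dots> = 10 * (\<Sum>x\<in>{..<n}. card {i\<in>R. P i x \<notin> F})" by (simp add: eq sum_distrib_left)
  also have "\<dots> = (\<Sum>x\<in>{..<n}. 10 * card {i\<in>R. P i x \<notin> F})" by (simp add: sum_distrib_left)
  also have "\<dots> < (\<Sum>x\<in>{..<n}. card R)" using n0 lt by (intro sum_strict_mono) auto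
  also have "\<dots> = n * card R" by simp
  finally show False by simp
qed

lemma greedy:
  fixes P :: "'i \<Rightarrow> nat \<Rightarrow> 'a" and R :: "'i set" and F :: "'a set"
  assumes fR: "finite R" and n0: "n > 0"
    and good: "\<And>i. i \<in> R \<Longrightarrow> 10 * card {x\<in>{..<n}. P i x \<notin> F} \<ge> n"
  shows "\<exists>X \<subseteq> {..<n}. card X \<le> t \<and> real (card {i\<in>R. \<forall>x\<in>X. P i x \<in> F}) \<le> (9/10)^t * card R"
  using fR good
proof (induction t arbitrary: R)
  case 0
  show ?case by (intro exI[of _ "{}"]) simp
next
  case (Suc t)
  obtain x0 where x0: "x0 < n" "10 * card {i\<in>R. P i x0 \<notin> F} \<ge> card R"
    using greedy_step[of R n P F] Suc.prems n0 by blast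
  define R' where "R' = {i\<in>R. P i x0 \<in> F}"
  have fR': "finite R'" unfolding R'_def using Suc.prems(1) by simp
  have "R' \<union> {i\<in>R. P i x0 \<notin> F} = R" "R' \<inter> {i\<in>R. P i x0 \<notin> F} = {}" unfolding R'_def by auto
  then have "card R' + card {i\<in>R. P i x0 \<notin> F} = card R"
    using Suc.prems(1) by (metis card_Un_disjoint fR' finite_Un)
  then have cR': "10 * card R' \<le> 9 * card R" using x0(2) by linarith
  obtain X' where X': "X' \<subseteq> {..<n}" "card X' \<le> t"
      "real (card {i\<in>R'. \<forall>x\<in>X'. P i x \<in> F}) \<le> (9/10)^t * card R'"
    using Suc.IH[OF fR'] Suc.prems(2) unfolding R'_def by auto
  define X where "X = insert x0 X'"
  have "X \<subseteq> {..<n}" unfolding X_def using X' x0 by auto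
  moreover have "card X \<le> Suc t" unfolding X_def using X'
    by (metis card_insert_le_m1 finite_lessThan finite_subset le_SucI diff_Suc_1 zero_less_Suc card_insert_if)
  moreover have seq: "{i\<in>R. \<forall>x\<in>X. P i x \<in> F} = {i\<in>R'. \<forall>x\<in>X'. P i x \<in> F}" unfolding X_def R'_def by auto
  moreover have ineq: "(9/10)^t * real (card R') \<le> (9/10)^(Suc t) * card R"
  proof -
    have "real (card R') \<le> 9/10 * card R" using cR' by (simp add: field_simps)
    then have "(9/10)^t * real (card R') \<le> (9/10)^t * (9/10 * card R)" by (intro mult_left_mono) auto
    then show ?thesis by simp
  qed
  moreover have "real (card {i\<in>R. \<forall>x\<in>X. P i x \<in> F}) \<le> (9/10)^(Suc t) * card R"
    unfolding seq using X'(3) ineq by linarith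
  ultimately show ?case by blast
qed


lemma grid_inj:
  fixes n x y x' y' :: nat
  assumes "y < n" "y' < n" "x*n + y = x'*n + y'"
  shows "x = x' \<and> y = y'"
proof -
  have a: "x = (x*n + y) div n" "y = (x*n+y) mod n" using assms(1) by auto
  have b: "x' = (x'*n + y') div n" "y' = (x'*n+y') mod n" using assms(2) by auto
  show ?thesis using a b assms(3) by simp
qed

lemma grid_lt:
  fixes n x y :: nat
  assumes "x < n" "y < n"
  shows "x*n + y < n^2"
proof -
  have "x*n + y < x*n + n" using assms by simp
  also have "\<dots> = (x+1)*n" by simp
  also have "\<dots> \<le> n*n" using assms by (intro mult_right_mono) auto
  finally show ?thesis by (simp add: power2_eq_square)
qed

lemma ln_facts:
  fixes n :: nat
  assumes "n \<ge> 4"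
  shows "ln (real n) \<ge> 1"
proof -
  have ln2': "ln (2::real) \<ge> 1/2"
  proof -
    have "ln (1/2::real) \<le> 1/2 - 1" by (rule ln_le_minus_one) simp
    then show ?thesis by (simp add: ln_div)
  qed
  have a: "ln (4::real) = 2 * ln 2" using ln_realpow[of 2 2] by simp
  have b: "ln (4::real) \<le> ln (real n)" using assms by simp
  show ?thesis using a b ln2' by linarith
qed

lemma decay:
  fixes n t :: nat
  assumes n: "n \<ge> 1" and t: "real t \<ge> 20 * ln (real n)"
  shows "(9/10)^t * real n ^ 2 \<le> 1"
proof -
  have l9: "ln (9/10::real) \<le> -1/10" using ln_le_minus_one[of "9/10::real"] by simp
  have pos: "(9/10)^t * real n ^ 2 > 0" using n by simp
  have "ln ((9/10)^t * real n ^ 2) = real t * ln (9/10) + 2 * ln (real n)"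
    using n by (simp add: ln_mult ln_realpow)
  also have "\<dots> \<le> real t * (-1/10) + 2 * ln (real n)"
    using l9 by (intro add_right_mono mult_left_mono) auto
  also have "\<dots> \<le> 0" using t by simp
  finally show ?thesis using pos by simp
qed

lemma large_case:
  fixes n :: nat and I :: "'i set" and g :: "'i \<Rightarrow> nat \<Rightarrow> nat"
  assumes n100: "n \<ge> 100" and fI: "finite I" and cI: "card I = n^2"
    and gl: "\<And>i x. i \<in> I \<Longrightarrow> x < n \<Longrightarrow> g i x < n"
    and agr: "\<And>i j. i \<in> I \<Longrightarrow> j \<in> I \<Longrightarrow> i \<noteq> j \<Longrightarrow> card {x\<in>{..<n}. g i x = g j x} \<le> 63"
  shows "\<exists>(V :: nat set) (E :: nat set set).
           uniform_hypergraph n V E \<and> card V = n^2 \<and> finite E \<and> card E = n^2 \<and>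
           (\<forall>F \<subseteq> V. real (card F) \<le> real (n^2) / 100 \<longrightarrow>
              (\<exists>H \<subseteq> V. real (card H) \<le> 100 * real n * ln (real n) \<and> H \<inter> F = {} \<and>
                 card {e \<in> E. e \<inter> H = {}} \<le> n))"
proof -
  define P where "P i x = x*n + g i x" for i x
  define e where "e i = P i ` {..<n}" for i
  define V where "V = {..<n^2}"
  have n0: "n > 0" using n100 by simp
  have injP: "inj_on (P i) {..<n}" if "i \<in> I" for i
    unfolding inj_on_def P_def using grid_inj gl that by blast
  have ce: "card (e i) = n" if "i \<in> I" for i
    unfolding e_def using card_image[OF injP[OF that]] by simp
  have PV: "P i x \<in> V" if "i \<in> I" "x < n" for i x
    unfolding P_def V_def using grid_lt gl that by simp
  have eV: "e i \<subseteq> V" if "i \<in> I" for i unfolding e_def using PV that by auto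
  have int: "card (e i \<inter> e j) \<le> 63" if "i \<in> I" "j \<in> I" "i \<noteq> j" for i j
  proof -
    have "e i \<inter> e j \<subseteq> P i ` {x\<in>{..<n}. g i x = g j x}"
    proof
      fix v assume "v \<in> e i \<inter> e j"
      then obtain x x' where "x < n" "x' < n" "v = P i x" "v = P j x'" unfolding e_def by auto
      then have "x = x' \<and> g i x = g j x'" unfolding P_def using grid_inj gl that by metis
      then show "v \<in> P i ` {x\<in>{..<n}. g i x = g j x}" using \<open>x < n\<close> \<open>v = P i x\<close> by auto
    qed
    then have "card (e i \<inter> e j) \<le> card (P i ` {x\<in>{..<n}. g i x = g j x})" by (intro card_mono) auto
    also have "\<dots> \<le> card {x\<in>{..<n}. g i x = g j x}" by (rule card_image_le) simp
    also have "\<dots> \<le> 63" using agr that by blast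
    finally show ?thesis .
  qed
  have inje: "inj_on e I"
  proof (rule inj_onI)
    fix i j assume ij: "i \<in> I" "j \<in> I" "e i = e j"
    show "i = j"
    proof (rule ccontr)
      assume "i \<noteq> j"
      then have "card (e i \<inter> e j) \<le> 63" using int ij by blast
      then show False using ij ce n100 by simp
    qed
  qed
  define E where "E = e ` I"
  have cE: "card E = n^2" unfolding E_def using card_image[OF inje] cI by simp
  have fE: "finite E" unfolding E_def using fI by simp
  have uni: "uniform_hypergraph n V E" unfolding uniform_hypergraph_def E_def V_def
    using eV ce unfolding V_def by auto
  have cV: "card V = n^2" unfolding V_def by simp
  have main: "\<exists>H \<subseteq> V. real (card H) \<le> 100 * real n * ln (real n) \<and> H \<inter> F = {} \<and>
                 card {e \<in> E. e \<inter> H = {}} \<le> n"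
    if FV: "F \<subseteq> V" and Fs: "real (card F) \<le> real (n^2) / 100" for F
  proof -
    have fF: "finite F" using FV unfolding V_def using finite_subset by blast
    have Fsz: "100 * card F \<le> n^2"
    proof -
      have "real (100 * card F) \<le> real (n^2)" using Fs by simp
      then show ?thesis by (simp only: of_nat_le_iff)
    qed
    define cout where "cout i = card {x\<in>{..<n}. P i x \<notin> F}" for i
    have eF: "card (e i \<inter> F) + cout i = n" if "i \<in> I" for i
    proof -
      have "e i \<inter> F = P i ` {x\<in>{..<n}. P i x \<in> F}" unfolding e_def by auto
      moreover have "inj_on (P i) {x\<in>{..<n}. P i x \<in> F}" by (rule inj_on_subset[OF injP[OF that]]) auto
      ultimately have "card (e i \<inter> F) = card {x\<in>{..<n}. P i x \<in> F}"
        using card_image by metis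
      moreover have "card {x\<in>{..<n}. P i x \<in> F} + cout i = card {..<n}"
      proof -
        have "{x\<in>{..<n}. P i x \<in> F} \<union> {x\<in>{..<n}. P i x \<notin> F} = {..<n}" by auto
        then show ?thesis unfolding cout_def by (subst card_Un_disjoint[symmetric]) auto
      qed
      ultimately show ?thesis by simp
    qed
    define B where "B = {i\<in>I. 10 * cout i < n}"
    have fB: "finite B" unfolding B_def using fI by simp
    have "(81 - real 63) * card B \<le> n"
    proof (rule cs_bad[OF fB fF n0, of e])
      fix i assume i: "i \<in> B"
      then have iI: "i \<in> I" unfolding B_def by simp
      show "card (e i \<inter> F) \<le> n" using eF[OF iI] by simp
      show "9 * n \<le> 10 * card (e i \<inter> F)" using eF[OF iI] i unfolding B_def by simp
    next
      fix i j assume "i \<in> B" "j \<in> B" "i \<noteq> j"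
      then have "card (e i \<inter> e j) \<le> 63" using int unfolding B_def by simp
      moreover have "card (e i \<inter> e j \<inter> F) \<le> card (e i \<inter> e j)"
        by (rule card_mono) (auto simp: e_def)
      ultimately show "card (e i \<inter> e j \<inter> F) \<le> 63" by simp
    next
      show "100 * card F \<le> n^2" by (rule Fsz)
    qed
    then have cB: "18 * card B \<le> n" by simp
    define G where "G = I - B"
    have fG: "finite G" unfolding G_def using fI by simp
    define t where "t = nat \<lceil>20 * ln (real n)\<rceil>"
    have lnn: "ln (real n) \<ge> 1" using ln_facts n100 by simp
    have t1: "real t \<ge> 20 * ln (real n)" unfolding t_def by linarith
    have t2: "real t \<le> 20 * ln (real n) + 1" unfolding t_def using lnn by linarith
    obtain X where X: "X \<subseteq> {..<n}" "card X \<le> t"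
      "real (card {i\<in>G. \<forall>x\<in>X. P i x \<in> F}) \<le> (9/10)^t * card G"
      using greedy[OF fG n0, of P F t] unfolding G_def B_def cout_def by force
    define Rem where "Rem = {i\<in>G. \<forall>x\<in>X. P i x \<in> F}"
    have "card G \<le> n^2" unfolding G_def using cI fI by (metis card_mono Diff_subset)
    then have "(9/10)^t * real (card G) \<le> (9/10)^t * real n ^ 2" by simp
    also have "\<dots> \<le> 1" by (rule decay) (use n100 t1 in auto)
    finally have cRem: "card Rem \<le> 1" using X(3) unfolding Rem_def by linarith
    define H where "H = (\<Union>x\<in>X. (\<lambda>y. x*n + y) ` {..<n}) - F"
    have HV: "H \<subseteq> V" unfolding H_def V_def using X(1) grid_lt by auto
    have HF: "H \<inter> F = {}" unfolding H_def by auto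
    have "card H \<le> card (\<Union>x\<in>X. (\<lambda>y. x*n + y) ` {..<n})"
      unfolding H_def using X(1) by (intro card_mono) (auto intro: finite_subset)
    also have "\<dots> \<le> (\<Sum>x\<in>X. card ((\<lambda>y. x*n + y) ` {..<n}))" by (rule card_UN_le) (use X(1) finite_subset in blast)
    also have "\<dots> \<le> (\<Sum>x\<in>X. n)" by (intro sum_mono) (metis card_image_le card_lessThan finite_lessThan)
    also have "\<dots> = card X * n" by simp
    also have "\<dots> \<le> t * n" using X(2) by simp
    finally have "card H \<le> t * n" .
    then have "real (card H) \<le> real t * real n" by (metis of_nat_le_iff of_nat_mult)
    also have "\<dots> \<le> (20 * ln (real n) + 1) * real n" using t2 by (intro mult_right_mono) auto
    also have "\<dots> \<le> 100 * real n * ln (real n)" using lnn n0 by (simp add: algebra_simps)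
    finally have cH: "real (card H) \<le> 100 * real n * ln (real n)" .
    have sub: "{ee \<in> E. ee \<inter> H = {}} \<subseteq> e ` (B \<union> Rem)"
    proof
      fix ee assume "ee \<in> {ee \<in> E. ee \<inter> H = {}}"
      then obtain i where i: "i \<in> I" "ee = e i" "e i \<inter> H = {}" unfolding E_def by auto
      have "i \<in> B \<union> Rem"
      proof (cases "i \<in> B")
        case False
        have "P i x \<in> F" if x: "x \<in> X" for x
        proof (rule ccontr)
          assume "P i x \<notin> F"
          moreover have "x < n" using X(1) x by auto
          ultimately have "P i x \<in> H" unfolding H_def P_def using x gl[OF i(1)] by auto
          moreover have "P i x \<in> e i" unfolding e_def using \<open>x < n\<close> by auto
          ultimately show False using i(3) by auto
        qed
        then show ?thesis using False i(1) unfolding Rem_def G_def by auto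
      qed simp
      then show "ee \<in> e ` (B \<union> Rem)" using i by auto
    qed
    have "card {ee \<in> E. ee \<inter> H = {}} \<le> card (e ` (B \<union> Rem))"
      by (rule card_mono[OF _ sub]) (use fB fG in \<open>simp add: Rem_def\<close>)
    also have "\<dots> \<le> card (B \<union> Rem)" by (rule card_image_le) (use fB fG in \<open>simp add: Rem_def\<close>)
    also have "\<dots> \<le> card B + card Rem" by (rule card_Un_le)
    also have "\<dots> \<le> n" using cB cRem n100 by linarith
    finally show ?thesis using HV HF cH by blast
  qed
  show ?thesis using uni cV fE cE main by blast
qed


lemma small_case:
  fixes n :: nat
  assumes n1: "n \<ge> 1" and n100: "n < 100"
  shows "\<exists>(V :: nat set) (E :: nat set set).
           uniform_hypergraph n V E \<and> card V = n^2 \<and> finite E \<and> card E = n^2 \<and>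
           (\<forall>F \<subseteq> V. real (card F) \<le> real (n^2) / 100 \<longrightarrow>
              (\<exists>H \<subseteq> V. real (card H) \<le> 100 * real n * ln (real n) \<and> H \<inter> F = {} \<and>
                 card {e \<in> E. e \<inter> H = {}} \<le> n))"
proof -
  define V where "V = {..<n^2}"
  define Fam where "Fam = {S. S \<subseteq> V \<and> card S = n}"
  have cV: "card V = n^2" unfolding V_def by simp
  have cFam: "card Fam = (n^2) choose n" unfolding Fam_def using n_subsets[of V n] cV unfolding V_def by simp
  have "n^2 \<le> (n^2) choose n"
  proof (cases "n = 1")
    case True then show ?thesis by simp
  next
    case False
    then have "n \<ge> 2" using n1 by simp
    then have "n < n^2" by (simp add: power2_eq_square)
    then show ?thesis using n1 by (intro upper_le_binomial) auto
  qed
  then obtain E where E: "E \<subseteq> Fam" "card E = n^2" "finite E"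
    using obtain_subset_with_card_n[of "n^2" Fam] cFam by auto
  have uni: "uniform_hypergraph n V E" unfolding uniform_hypergraph_def V_def using E(1) unfolding Fam_def V_def by auto
  have main: "\<exists>H \<subseteq> V. real (card H) \<le> 100 * real n * ln (real n) \<and> H \<inter> F = {} \<and>
                 card {e \<in> E. e \<inter> H = {}} \<le> n"
    if FV: "F \<subseteq> V" and Fs: "real (card F) \<le> real (n^2) / 100" for F
  proof -
    have "real (100 * card F) \<le> real (n^2)" using Fs by simp
    then have "100 * card F \<le> n^2" by (simp only: of_nat_le_iff)
    moreover have "n^2 < 100 * n" using n100 n1 by (simp add: power2_eq_square)
    ultimately have cF: "card F < n" by linarith
    show ?thesis
    proof (cases "n = 1")
      case True
      have "card {e \<in> E. e \<inter> {} = {}} \<le> n" using E(2) True by simp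
      then show ?thesis using True by (intro exI[of _ "{}"]) auto
    next
      case False
      then have n2: "n \<ge> 2" using n1 by simp
      define H where "H = V - F"
      have HV: "H \<subseteq> V" "H \<inter> F = {}" unfolding H_def by auto
      have cH: "card H \<le> n^2" unfolding H_def using cV by (metis Diff_subset card_mono finite_lessThan V_def)
      have ln2: "ln (2::real) \<ge> 1/2"
      proof -
        have "ln (1/2::real) \<le> 1/2 - 1" by (rule ln_le_minus_one) simp
        then show ?thesis by (simp add: ln_div)
      qed
      have "real n \<le> 100 * ln (real n)"
      proof (cases "n \<ge> 4")
        case True then have "ln (real n) \<ge> 1" by (rule ln_facts)
        then show ?thesis using n100 by simp
      next
        case False
        have "ln (2::real) \<le> ln (real n)" using n2 by simp
        then show ?thesis using False ln2 by simp
      qed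
      then have "real n * real n \<le> real n * (100 * ln (real n))" by (intro mult_left_mono) auto
      then have "real (card H) \<le> 100 * real n * ln (real n)"
      proof -
        have a: "real (card H) \<le> real (n^2)" using cH by (simp only: of_nat_le_iff)
        have b: "real (n^2) = real n * real n" by (simp add: power2_eq_square)
        have c: "real n * (100 * ln (real n)) = 100 * real n * ln (real n)" by simp
        show ?thesis using a b c \<open>real n * real n \<le> real n * (100 * ln (real n))\<close> by linarith
      qed
      moreover have emp: "{e \<in> E. e \<inter> H = {}} = {}"
      proof (rule ccontr)
        assume "{e \<in> E. e \<inter> H = {}} \<noteq> {}"
        then obtain e where e: "e \<in> E" "e \<inter> H = {}" by auto
        then have "e \<subseteq> V" "card e = n" using E(1) unfolding Fam_def by auto
        then have "e \<subseteq> F" using e(2) unfolding H_def by auto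
        then have "card e \<le> card F" using FV V_def finite_subset by (metis card_mono finite_lessThan)
        then show False using cF \<open>card e = n\<close> by simp
      qed
      moreover have "card {e \<in> E. e \<inter> H = {}} \<le> n" by (simp only: emp card.empty)
      ultimately show ?thesis using HV by blast
    qed
  qed
  show ?thesis using uni cV E main by blast
qed

theorem lemma3p1:
  fixes n :: nat
  assumes "n \<ge> 1"
  shows "\<exists>(V :: nat set) (E :: nat set set).
           uniform_hypergraph n V E \<and> card V = n^2 \<and> finite E \<and> card E = n^2 \<and>
           (\<forall>F \<subseteq> V. real (card F) \<le> real (n^2) / 100 \<longrightarrow>
              (\<exists>H \<subseteq> V. real (card H) \<le> 100 * real n * ln (real n) \<and> H \<inter> F = {} \<and>
                 card {e \<in> E. e \<inter> H = {}} \<le> n))"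
proof (cases "n \<ge> 100")
  case True
  obtain I :: "(nat \<times> nat) set" and g where Iall: "finite I \<and> card I = n^2 \<and>
    (\<forall>i x. i \<in> I \<longrightarrow> x < n \<longrightarrow> g i x < n) \<and>
    (\<forall>i j. i \<in> I \<longrightarrow> j \<in> I \<longrightarrow> i \<noteq> j \<longrightarrow> card {x\<in>{..<n}. g i x = g j x} \<le> 63)"
    using construction[OF True] by (elim exE) (rule that, assumption)
  note I = conjunct1[OF Iall] conjunct1[OF conjunct2[OF Iall]] conjunct1[OF conjunct2[OF conjunct2[OF Iall]]]
    conjunct2[OF conjunct2[OF conjunct2[OF Iall]]]
  have gl: "\<And>i x. i \<in> I \<Longrightarrow> x < n \<Longrightarrow> g i x < n" using I(3) by blast
  have agr: "\<And>i j. i \<in> I \<Longrightarrow> j \<in> I \<Longrightarrow> i \<noteq> j \<Longrightarrow> card {x\<in>{..<n}. g i x = g j x} \<le> 63"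
    using I(4) by blast
  show ?thesis by (rule large_case[OF True I(1) I(2) gl agr])
next
  case False
  then have "n < 100" by simp
  show ?thesis by (rule small_case[OF assms \<open>n < 100\<close>])
qed

end
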